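(* Let $G=(V,E)$ be a finite planar embedded graph, $\mathbf{p}$ a packing of $G$, $V=V^+\sqcup V^-\sqcup V^=\sqcup V^0$ a partition, and $\mathbf{p}'$ a nontrivial proper infinitesimal flex. Then exactly one of the following holds: (1) $\mathbf{p}'$ is extendable; (2) there exists an equilibrium stress $\omega$ blocking $\mathbf{p}'$.
   Context: A packing of $G=(V,E)$, $V=\{1,\dots,n\}$, is $\mathbf{p}=(x_1,y_1,r_1,\dots,x_n,y_n,r_n)\in\mathbb{R}^{3n}$, all $r_i>0$, with $(r_i+r_j)^2=(x_i-x_j)^2+(y_i-y_j)^2$ for all $(i,j)\in E$ and the neighbors of each vertex in the same counterclockwise order as in the embedding; $\mathbf{p}_i=(x_i,y_i)$. Partition: $V^+$ (radius may increase or stay), $V^-$ (may decrease or stay), $V^=$ (fixed), $V^0$ (free). An infinitesimal flex is $\mathbf{p}'$ with $(\mathbf{p}_i-\mathbf{p}_j)\cdot(\mathbf{p}_i'-\mathbf{p}_j')=(r_i+r_j)(r_i'+r_j')$ for all edges; proper if $r_i'\ge 0$ on $V^+$, $\le0$ on $V^-$, $=0$ on $V^=$; trivial if it is the derivative of a family of rigid motions (rotations/translations of centers, radii unchanged). For proper $\mathbf{p}'$, the modified partition is $\tilde V^+=\{i\in V^+:r_i'=0\}$, $\tilde V^-=\{i\in V^-:r_i'=0\}$, $\tilde V^==V^=$, $\tilde V^0$ the rest. $\mathbf{p}'$ is extendable if there is $\mathbf{p}''\in\mathbb{R}^{3n}$ with $(\mathbf{p}_i-\mathbf{p}_j)\cdot(\mathbf{p}_i''-\mathbf{p}_j'')-(r_i+r_j)(r_i''+r_j'')=(r_i'+r_j')^2-(\mathbf{p}_i'-\mathbf{p}_j')\cdot(\mathbf{p}_i'-\mathbf{p}_j')$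 for all $(i,j)\in E$, and $r_i''\ge0$ on $\tilde V^+$, $\le 0$ on $\tilde V^-$, $=0$ on $\tilde V^=$. A stress $\omega:E\to\mathbb{R}$ is an equilibrium stress if $\sum_{j:(i,j)\in E}\omega_{ij}(\mathbf{p}_i-\mathbf{p}_j)=0$ for all $i$; its radial force sum is $\omega_i=\sum_{j:(i,j)\in E}\omega_{ij}(r_i+r_j)$. An equilibrium stress $\omega$ blocks $\mathbf{p}'$ if $\omega_i\ge 0$ for $i\in\tilde V^-$, $\omega_i\le0$ for $i\in\tilde V^+$, $\omega_i=0$ for $i\in\tilde V^0$, and $\sum_{(i,j)\in E}\omega_{ij}[(\mathbf{p}_i'-\mathbf{p}_j')\cdot(\mathbf{p}_i'-\mathbf{p}_j')-(r_i'+r_j')^2]>0$. *)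

theory Defs
  imports Complex_Main
begin

text \<open>Vertices are 1..n. Undirected edges are stored once each as ordered pairs (i,j) in E.
Centres of discs are complex numbers (points of R^2), radii are reals.\<close>

definition adj :: "(nat \<times> nat) set \<Rightarrow> nat \<Rightarrow> nat \<Rightarrow> bool" where
  "adj E i j \<longleftrightarrow> (i, j) \<in> E \<or> (j, i) \<in> E"

definition nbrs :: "(nat \<times> nat) set \<Rightarrow> nat \<Rightarrow> nat set" where
  "nbrs E i = {j. adj E i j}"

definition simple_graph :: "nat \<Rightarrow> (nat \<times> nat) set \<Rightarrow> bool" where
  "simple_graph n E \<longleftrightarrow> E \<subseteq> {1..n} \<times> {1..n} \<and> (\<forall>i. (i, i) \<notin> E)
     \<and> (\<forall>i j. (i, j) \<in> E \<longrightarrow> (j, i) \<notin> E)"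

text \<open>Combinatorial embedding: rotation system (counterclockwise cyclic order of neighbours).\<close>
definition rotation_system :: "nat \<Rightarrow> (nat \<times> nat) set \<Rightarrow> (nat \<Rightarrow> nat list) \<Rightarrow> bool" where
  "rotation_system n E rot \<longleftrightarrow> (\<forall>i\<in>{1..n}. distinct (rot i) \<and> set (rot i) = nbrs E i)"

definition rot_succ :: "(nat \<Rightarrow> nat list) \<Rightarrow> nat \<Rightarrow> nat \<Rightarrow> nat" where
  "rot_succ rot v u = (let xs = rot v; k = (THE k. k < length xs \<and> xs ! k = u)
                       in xs ! ((k + 1) mod length xs))"

definition face_next :: "(nat \<Rightarrow> nat list) \<Rightarrow> nat \<times> nat \<Rightarrow> nat \<times> nat" where
  "face_next rot d = (snd d, rot_succ rot (snd d) (fst d))"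

definition darts :: "(nat \<times> nat) set \<Rightarrow> (nat \<times> nat) set" where
  "darts E = {(a, b). adj E a b}"

text \<open>Faces = orbits of the face-tracing permutation on darts, plus one face per isolated vertex.\<close>
definition num_faces :: "nat \<Rightarrow> (nat \<times> nat) set \<Rightarrow> (nat \<Rightarrow> nat list) \<Rightarrow> nat" where
  "num_faces n E rot = card (darts E // {(d, e). \<exists>k. (face_next rot ^^ k) d = e})
     + card {v \<in> {1..n}. nbrs E v = {}}"

definition num_components :: "nat \<Rightarrow> (nat \<times> nat) set \<Rightarrow> nat" where
  "num_components n E = card ({1..n} // ({(a, b). adj E a b}\<^sup>*))"

text \<open>A planar embedded graph: simple graph with a rotation system of genus 0 (Euler formula
  V - E + F = 2C, each component embedded in the sphere).\<close>
definition planar_embedded :: "nat \<Rightarrow> (nat \<times> nat) set \<Rightarrow> (nat \<Rightarrow> nat list) \<Rightarrow> bool" where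
  "planar_embedded n E rot \<longleftrightarrow> simple_graph n E \<and> rotation_system n E rot \<and>
     int n - int (card E) + int (num_faces n E rot) = 2 * int (num_components n E)"

definition ccw_ordered :: "complex list \<Rightarrow> bool" where
  "ccw_ordered ds \<longleftrightarrow> (\<exists>\<theta>::nat \<Rightarrow> real.
      (\<forall>m < length ds. ds ! m = complex_of_real (cmod (ds ! m)) * cis (\<theta> m))
    \<and> (\<forall>m. Suc m < length ds \<longrightarrow> \<theta> m < \<theta> (Suc m))
    \<and> (0 < length ds \<longrightarrow> \<theta> (length ds - 1) < \<theta> 0 + 2 * pi))"

definition dot2 :: "complex \<Rightarrow> complex \<Rightarrow> real" where
  "dot2 a b = Re a * Re b + Im a * Im b"

definition packing :: "nat \<Rightarrow> (nat \<times> nat) set \<Rightarrow> (nat \<Rightarrow> nat list) \<Rightarrow>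
    (nat \<Rightarrow> complex) \<Rightarrow> (nat \<Rightarrow> real) \<Rightarrow> bool" where
  "packing n E rot z r \<longleftrightarrow> (\<forall>i\<in>{1..n}. r i > 0)
     \<and> (\<forall>(i, j)\<in>E. (r i + r j)^2 = (Re (z i) - Re (z j))^2 + (Im (z i) - Im (z j))^2)
     \<and> (\<forall>i\<in>{1..n}. ccw_ordered (map (\<lambda>j. z j - z i) (rot i)))"

definition vpartition :: "nat \<Rightarrow> nat set \<Rightarrow> nat set \<Rightarrow> nat set \<Rightarrow> nat set \<Rightarrow> bool" where
  "vpartition n Vp Vm Veq V0 \<longleftrightarrow> Vp \<union> Vm \<union> Veq \<union> V0 = {1..n}
     \<and> Vp \<inter> Vm = {} \<and> Vp \<inter> Veq = {} \<and> Vp \<inter> V0 = {}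
     \<and> Vm \<inter> Veq = {} \<and> Vm \<inter> V0 = {} \<and> Veq \<inter> V0 = {}"

definition inf_flex :: "(nat \<times> nat) set \<Rightarrow> (nat \<Rightarrow> complex) \<Rightarrow> (nat \<Rightarrow> real) \<Rightarrow>
    (nat \<Rightarrow> complex) \<Rightarrow> (nat \<Rightarrow> real) \<Rightarrow> bool" where
  "inf_flex E z r z' r' \<longleftrightarrow>
     (\<forall>(i, j)\<in>E. dot2 (z i - z j) (z' i - z' j) = (r i + r j) * (r' i + r' j))"

definition proper_signs :: "nat set \<Rightarrow> nat set \<Rightarrow> nat set \<Rightarrow> (nat \<Rightarrow> real) \<Rightarrow> bool" where
  "proper_signs Vp Vm Veq r' \<longleftrightarrow> (\<forall>i\<in>Vp. r' i \<ge> 0) \<and> (\<forall>i\<in>Vm. r' i \<le> 0) \<and> (\<forall>i\<in>Veq. r' i = 0)"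

definition trivial_flex :: "nat \<Rightarrow> (nat \<Rightarrow> complex) \<Rightarrow> (nat \<Rightarrow> complex) \<Rightarrow> (nat \<Rightarrow> real) \<Rightarrow> bool" where
  "trivial_flex n z z' r' \<longleftrightarrow> (\<exists>(\<theta>::real \<Rightarrow> real) (\<tau>::real \<Rightarrow> complex).
      \<theta> 0 = 0 \<and> \<tau> 0 = 0 \<and>
      (\<forall>i\<in>{1..n}. ((\<lambda>t. cis (\<theta> t) * z i + \<tau> t) has_vector_derivative z' i) (at 0) \<and> r' i = 0))"

definition extendable :: "nat \<Rightarrow> (nat \<times> nat) set \<Rightarrow> nat set \<Rightarrow> nat set \<Rightarrow> nat set \<Rightarrow>
    (nat \<Rightarrow> complex) \<Rightarrow> (nat \<Rightarrow> real) \<Rightarrow> (nat \<Rightarrow> complex) \<Rightarrow> (nat \<Rightarrow> real) \<Rightarrow> bool" where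
  "extendable n E Vp Vm Veq z r z' r' \<longleftrightarrow> (\<exists>(z''::nat \<Rightarrow> complex) (r''::nat \<Rightarrow> real).
      (\<forall>(i, j)\<in>E. dot2 (z i - z j) (z'' i - z'' j) - (r i + r j) * (r'' i + r'' j)
                  = (r' i + r' j)^2 - dot2 (z' i - z' j) (z' i - z' j))
    \<and> proper_signs {i\<in>Vp. r' i = 0} {i\<in>Vm. r' i = 0} Veq r'')"

definition edge_weight :: "(nat \<times> nat) set \<Rightarrow> (nat \<times> nat \<Rightarrow> real) \<Rightarrow> nat \<Rightarrow> nat \<Rightarrow> real" where
  "edge_weight E \<omega> i j = (if (i, j) \<in> E then \<omega> (i, j) else \<omega> (j, i))"

definition equilibrium_stress :: "nat \<Rightarrow> (nat \<times> nat) set \<Rightarrow> (nat \<Rightarrow> complex) \<Rightarrow>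
    (nat \<times> nat \<Rightarrow> real) \<Rightarrow> bool" where
  "equilibrium_stress n E z \<omega> \<longleftrightarrow>
     (\<forall>i\<in>{1..n}. (\<Sum>j\<in>nbrs E i. complex_of_real (edge_weight E \<omega> i j) * (z i - z j)) = 0)"

definition radial_sum :: "(nat \<times> nat) set \<Rightarrow> (nat \<Rightarrow> real) \<Rightarrow> (nat \<times> nat \<Rightarrow> real) \<Rightarrow> nat \<Rightarrow> real" where
  "radial_sum E r \<omega> i = (\<Sum>j\<in>nbrs E i. edge_weight E \<omega> i j * (r i + r j))"

definition blocks :: "nat \<Rightarrow> (nat \<times> nat) set \<Rightarrow> nat set \<Rightarrow> nat set \<Rightarrow> nat set \<Rightarrow>
    (nat \<Rightarrow> complex) \<Rightarrow> (nat \<Rightarrow> real) \<Rightarrow> (nat \<Rightarrow> complex) \<Rightarrow> (nat \<Rightarrow> real) \<Rightarrow>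
    (nat \<times> nat \<Rightarrow> real) \<Rightarrow> bool" where
  "blocks n E Vp Vm Veq z r z' r' \<omega> \<longleftrightarrow>
     (let tVp = {i\<in>Vp. r' i = 0}; tVm = {i\<in>Vm. r' i = 0}; tV0 = {1..n} - (tVp \<union> tVm \<union> Veq) in
     equilibrium_stress n E z \<omega>
     \<and> (\<forall>i\<in>tVm. radial_sum E r \<omega> i \<ge> 0)
     \<and> (\<forall>i\<in>tVp. radial_sum E r \<omega> i \<le> 0)
     \<and> (\<forall>i\<in>tV0. radial_sum E r \<omega> i = 0)
     \<and> (\<Sum>(i, j)\<in>E. \<omega> (i, j) * (dot2 (z' i - z' j) (z' i - z' j) - (r' i + r' j)^2)) > 0)"

end

theory Submission
  imports Defs
begin


definition lin :: "'v set \<Rightarrow> ('v \<Rightarrow> real) \<Rightarrow> ('v \<Rightarrow> real) \<Rightarrow> real" where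
  "lin X a x = (\<Sum>v\<in>X. a v * x v)"

definition in_cone :: "(('v \<Rightarrow> real) \<times> real) set \<Rightarrow> ('v \<Rightarrow> real) \<times> real \<Rightarrow> bool" where
  "in_cone K y \<longleftrightarrow> (\<exists>l. (\<forall>k\<in>K. l k \<ge> 0) \<and> fst y = (\<lambda>v. \<Sum>k\<in>K. l k * fst k v)
      \<and> snd y = (\<Sum>k\<in>K. l k * snd k))"

lemma in_cone_pair:
  assumes "finite K" "p \<in> K" "q \<in> K" "a \<ge> 0" "b \<ge> 0"
  shows "in_cone K (\<lambda>v. a * fst p v + b * fst q v, a * snd p + b * snd q)"
proof -
  define l where "l k = (if k = p then a else 0) + (if k = q then b else 0)" for k
  have "(\<Sum>k\<in>K. l k * f k) = a * f p + b * f q" for f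
  proof -
    have "(\<Sum>k\<in>K. l k * f k) = (\<Sum>k\<in>K. (if k = p then a * f k else 0) + (if k = q then b * f k else 0))"
      by (rule sum.cong) (auto simp: l_def distrib_right)
    also have "\<dots> = a * f p + b * f q" using assms by (simp add: sum.distrib)
    finally show ?thesis .
  qed
  moreover have "\<forall>k\<in>K. l k \<ge> 0" using assms by (simp add: l_def)
  ultimately show ?thesis unfolding in_cone_def by (intro exI[of _ l]) auto
qed

lemma in_cone_mem:
  assumes "finite K" "p \<in> K"
  shows "in_cone K p"
  using in_cone_pair[of K p p 1 0] assms by simp

lemma in_cone_trans:
  assumes "finite K" "finite K'" "\<forall>c\<in>K'. in_cone K c" "in_cone K' y"
  shows "in_cone K y"
proof -
  have ex: "\<forall>c\<in>K'. \<exists>l. (\<forall>k\<in>K. l k \<ge> 0) \<and> fst c = (\<lambda>v. \<Sum>k\<in>K. l k * fst k v)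
      \<and> snd c = (\<Sum>k\<in>K. l k * snd k)"
    using assms(3) unfolding in_cone_def by blast
  from bchoice[OF ex] obtain w where w: "\<forall>c\<in>K'. (\<forall>k\<in>K. w c k \<ge> 0) \<and> fst c = (\<lambda>v. \<Sum>k\<in>K. w c k * fst k v)
      \<and> snd c = (\<Sum>k\<in>K. w c k * snd k)" by blast
  from assms(4) obtain l where l: "\<forall>c\<in>K'. l c \<ge> 0" "fst y = (\<lambda>v. \<Sum>c\<in>K'. l c * fst c v)"
      "snd y = (\<Sum>c\<in>K'. l c * snd c)"
    unfolding in_cone_def by blast
  define L where "L k = (\<Sum>c\<in>K'. l c * w c k)" for k
  have gen: "(\<Sum>c\<in>K'. l c * f c) = (\<Sum>k\<in>K. L k * g k)"
    if "\<forall>c\<in>K'. f c = (\<Sum>k\<in>K. w c k * g k)" for f g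
  proof -
    have "(\<Sum>c\<in>K'. l c * f c) = (\<Sum>c\<in>K'. \<Sum>k\<in>K. l c * w c k * g k)"
      using that by (simp add: sum_distrib_left mult.assoc)
    also have "\<dots> = (\<Sum>k\<in>K. \<Sum>c\<in>K'. l c * w c k * g k)" by (rule sum.swap)
    also have "\<dots> = (\<Sum>k\<in>K. L k * g k)" by (simp add: L_def sum_distrib_right)
    finally show ?thesis .
  qed
  have "fst y = (\<lambda>v. \<Sum>k\<in>K. L k * fst k v)"
  proof
    fix v
    show "fst y v = (\<Sum>k\<in>K. L k * fst k v)"
    proof -
      have "\<forall>c\<in>K'. fst c v = (\<Sum>k\<in>K. w c k * fst k v)" using w by simp
      then have "(\<Sum>c\<in>K'. l c * fst c v) = (\<Sum>k\<in>K. L k * fst k v)" by (rule gen)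
      then show ?thesis using l(2) by simp
    qed
  qed
  moreover have "snd y = (\<Sum>k\<in>K. L k * snd k)"
  proof -
    have "\<forall>c\<in>K'. snd c = (\<Sum>k\<in>K. w c k * snd k)" using w by simp
    then have "(\<Sum>c\<in>K'. l c * snd c) = (\<Sum>k\<in>K. L k * snd k)" by (rule gen)
    then show ?thesis using l(3) by simp
  qed
  moreover have "\<forall>k\<in>K. L k \<ge> 0" using l(1) w unfolding L_def by (simp add: sum_nonneg)
  ultimately show ?thesis unfolding in_cone_def by blast
qed

lemma lin_insert: "finite X \<Longrightarrow> v \<notin> X \<Longrightarrow> lin (insert v X) a x = a v * x v + lin X a x"
  by (simp add: lin_def)

lemma lin_cong: "(\<And>u. u \<in> X \<Longrightarrow> x u = y u) \<Longrightarrow> lin X a x = lin X a y"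
  by (simp add: lin_def)

lemma lin_comb: "lin X (\<lambda>u. c * a u + d * b u) x = c * lin X a x + d * lin X b x"
  by (simp add: lin_def sum.distrib sum_distrib_left distrib_right mult.assoc)

lemma fm_step_ineq:
  fixes pv qv sp sq bp bq :: real
  assumes "pv > 0" "qv < 0" "(- qv) * sp + pv * sq \<le> (- qv) * bp + pv * bq"
  shows "(bq - sq) / qv \<le> (bp - sp) / pv"
proof -
  have "qv * (bp - sp) \<le> pv * (bq - sq)" using assms(3) by (simp add: algebra_simps)
  have "(bp - sp) / pv * qv = qv * (bp - sp) / pv" by simp
  also have "\<dots> \<le> pv * (bq - sq) / pv"
    by (rule divide_right_mono) (use \<open>qv * (bp - sp) \<le> pv * (bq - sq)\<close> assms(1) in auto)
  also have "\<dots> = bq - sq" using assms(1) by simp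
  finally show ?thesis using assms(2) by (simp add: neg_divide_le_eq)
qed

lemma fourier_motzkin:
  assumes "finite X" "finite K" "\<not> (\<exists>x. \<forall>k\<in>K. lin X (fst k) x \<le> snd k)"
  shows "\<exists>y. in_cone K y \<and> (\<forall>v\<in>X. fst y v = 0) \<and> snd y < 0"
  using assms
proof (induction X arbitrary: K rule: finite_induct)
  case empty
  then obtain k where k: "k \<in> K" "snd k < 0" by (auto simp: lin_def not_le)
  then show ?case using in_cone_mem[OF empty.prems(1) k(1)] by (intro exI[of _ k]) auto
next
  case (insert v X)
  define K0 where "K0 = {k\<in>K. fst k v = 0}"
  define Kp where "Kp = {k\<in>K. fst k v > 0}"
  define Km where "Km = {k\<in>K. fst k v < 0}"
  define comb where "comb = (\<lambda>(p::('a \<Rightarrow> real) \<times> real, q::('a \<Rightarrow> real) \<times> real).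
     ((\<lambda>u. (- fst q v) * fst p u + fst p v * fst q u), (- fst q v) * snd p + fst p v * snd q))"
  define K' where "K' = K0 \<union> comb ` (Kp \<times> Km)"
  have fin: "finite K0" "finite Kp" "finite Km" using insert.prems(1) by (auto simp: K0_def Kp_def Km_def)
  then have finK': "finite K'" by (simp add: K'_def)
  have infeas: "\<not> (\<exists>x. \<forall>k\<in>K'. lin X (fst k) x \<le> snd k)"
  proof
    assume "\<exists>x. \<forall>k\<in>K'. lin X (fst k) x \<le> snd k"
    then obtain x where x: "\<forall>k\<in>K'. lin X (fst k) x \<le> snd k" by blast
    define s where "s k = lin X (fst k) x" for k :: "('a \<Rightarrow> real) \<times> real"
    define ub where "ub k = (snd k - s k) / fst k v" for k :: "('a \<Rightarrow> real) \<times> real"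
    define t where "t = (if Kp \<noteq> {} then Min (ub ` Kp) else if Km \<noteq> {} then Max (ub ` Km) else 0)"
    have lbub: "ub q \<le> ub p" if "p \<in> Kp" "q \<in> Km" for p q
    proof -
      have "comb (p, q) \<in> K'" using that by (auto simp: K'_def)
      then have "lin X (fst (comb (p,q))) x \<le> snd (comb (p,q))" using x by blast
      moreover have "lin X (fst (comb (p,q))) x = (- fst q v) * s p + fst p v * s q"
        unfolding comb_def case_prod_conv fst_conv lin_comb s_def ..
      moreover have "snd (comb (p,q)) = (- fst q v) * snd p + fst p v * snd q"
        unfolding comb_def by simp
      ultimately have "(- fst q v) * s p + fst p v * s q \<le> (- fst q v) * snd p + fst p v * snd q"
        by simp
      moreover have "fst p v > 0" "fst q v < 0" using that by (auto simp: Kp_def Km_def)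
      ultimately show ?thesis unfolding ub_def using fm_step_ineq by blast
    qed
    have tub: "t \<le> ub p" if "p \<in> Kp" for p
    proof -
      have "Kp \<noteq> {}" using that by blast
      then have "t = Min (ub ` Kp)" by (simp add: t_def)
      also have "\<dots> \<le> ub p" by (rule Min_le) (use fin(2) that in auto)
      finally show ?thesis .
    qed
    have tlb: "ub q \<le> t" if "q \<in> Km" for q
    proof (cases "Kp = {}")
      case True
      have "Km \<noteq> {}" using that by blast
      then have "t = Max (ub ` Km)" using True by (simp add: t_def)
      moreover have "ub q \<le> Max (ub ` Km)" by (rule Max_ge) (use fin(3) that in auto)
      ultimately show ?thesis by simp
    next
      case False
      then have "Min (ub ` Kp) \<in> ub ` Kp" using fin by (intro Min_in) auto
      then obtain p where "p \<in> Kp" "t = ub p" using False by (auto simp: t_def)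
      then show ?thesis using lbub that by auto
    qed
    define x' where "x' = x(v := t)"
    have "lin (insert v X) (fst k) x' \<le> snd k" if k: "k \<in> K" for k
    proof -
      have eq: "lin (insert v X) (fst k) x' = fst k v * t + s k"
        using insert.hyps by (simp add: lin_insert x'_def s_def, intro lin_cong) auto
      consider "fst k v = 0" | "fst k v > 0" | "fst k v < 0" by linarith
      then show ?thesis
      proof cases
        case 1
        then have "k \<in> K'" using k by (auto simp: K'_def K0_def)
        then show ?thesis using x 1 eq by (simp add: s_def)
      next
        case 2
        then have "t \<le> (snd k - s k) / fst k v" using tub[of k] k by (auto simp: Kp_def ub_def)
        then have "t * fst k v \<le> snd k - s k" using 2 by (simp add: pos_le_divide_eq)
        moreover have "fst k v * t = t * fst k v" by (rule mult.commute)
        ultimately show ?thesis using eq by linarith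
      next
        case 3
        then have "(snd k - s k) / fst k v \<le> t" using tlb[of k] k by (auto simp: Km_def ub_def)
        then have "t * fst k v \<le> snd k - s k" using 3 by (simp add: neg_divide_le_eq)
        moreover have "fst k v * t = t * fst k v" by (rule mult.commute)
        ultimately show ?thesis using eq by linarith
      qed
    qed
    then show False using insert.prems(2) by blast
  qed
  from insert.IH[OF finK' infeas] obtain y where
    y: "in_cone K' y" "\<forall>u\<in>X. fst y u = 0" "snd y < 0" by blast
  have cK': "\<forall>c\<in>K'. in_cone K c"
  proof
    fix c assume "c \<in> K'"
    then consider "c \<in> K0" | p q where "p \<in> Kp" "q \<in> Km" "c = comb (p, q)"
      unfolding K'_def by blast
    then show "in_cone K c"
    proof cases
      case 1 then show ?thesis using in_cone_mem[OF insert.prems(1)] by (auto simp: K0_def)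
    next
      case 2
      have "comb (p, q) = (\<lambda>u. (- fst q v) * fst p u + fst p v * fst q u, (- fst q v) * snd p + fst p v * snd q)"
        by (simp add: comb_def)
      moreover have "p \<in> K" "q \<in> K" "- fst q v \<ge> 0" "fst p v \<ge> 0" using 2 by (auto simp: Kp_def Km_def)
      ultimately show ?thesis using in_cone_pair[OF insert.prems(1), of p q "- fst q v" "fst p v"] 2 by simp
    qed
  qed
  have z: "fst c v = 0" if "c \<in> K'" for c
    using that by (auto simp: K'_def K0_def comb_def)
  obtain l where "fst y = (\<lambda>v. \<Sum>k\<in>K'. l k * fst k v)" using y(1) unfolding in_cone_def by blast
  then have "fst y v = 0" using z by simp
  then show ?case using in_cone_trans[OF insert.prems(1) finK' cK' y(1)] y by (intro exI[of _ y]) auto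
qed



lemma farkas_idx:
  fixes A :: "'i \<Rightarrow> 'v \<Rightarrow> real" and b :: "'i \<Rightarrow> real"
  assumes "finite X" "finite I" "\<not> (\<exists>x. \<forall>t\<in>I. lin X (A t) x \<le> b t)"
  shows "\<exists>L. (\<forall>t\<in>I. L t \<ge> 0) \<and> (\<forall>v\<in>X. (\<Sum>t\<in>I. L t * A t v) = 0) \<and> (\<Sum>t\<in>I. L t * b t) < 0"
proof -
  define g where "g t = (A t, b t)" for t
  have "\<not> (\<exists>x. \<forall>k\<in>g`I. lin X (fst k) x \<le> snd k)" using assms(3) by (auto simp: g_def)
  from fourier_motzkin[OF assms(1) _ this] obtain y where
    y: "in_cone (g`I) y" "\<forall>v\<in>X. fst y v = 0" "snd y < 0" using assms(2) by blast
  then obtain l where l: "\<forall>k\<in>g`I. l k \<ge> 0" "fst y = (\<lambda>v. \<Sum>k\<in>g`I. l k * fst k v)"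
    "snd y = (\<Sum>k\<in>g`I. l k * snd k)" unfolding in_cone_def by blast
  define c where "c t = card {t'\<in>I. g t' = g t}" for t
  define L where "L t = l (g t) / real (c t)" for t
  have c_pos: "c t > 0" if "t \<in> I" for t
    unfolding c_def using that assms(2) by (subst card_gt_0_iff) auto
  have key: "(\<Sum>t\<in>I. L t * h (g t)) = (\<Sum>k\<in>g`I. l k * h k)" for h
  proof -
    have "(\<Sum>t\<in>I. L t * h (g t)) = (\<Sum>k\<in>g`I. \<Sum>t\<in>{t\<in>I. g t = k}. L t * h (g t))"
      by (rule sum.image_gen[OF assms(2)])
    also have "\<dots> = (\<Sum>k\<in>g`I. l k * h k)"
    proof (rule sum.cong[OF refl])
      fix k assume "k \<in> g`I"
      then obtain t0 where t0: "t0 \<in> I" "k = g t0" by blast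
      have "(\<Sum>t\<in>{t\<in>I. g t = k}. L t * h (g t)) = (\<Sum>t\<in>{t\<in>I. g t = k}. l k * h k / real (c t0))"
        by (rule sum.cong) (auto simp: L_def c_def t0)
      also have "\<dots> = real (c t0) * (l k * h k / real (c t0))"
        by (simp add: c_def t0)
      also have "\<dots> = l k * h k" using c_pos[OF t0(1)] by simp
      finally show "(\<Sum>t\<in>{t\<in>I. g t = k}. L t * h (g t)) = l k * h k" .
    qed
    finally show ?thesis .
  qed
  have "\<forall>t\<in>I. L t \<ge> 0" using l(1) by (auto simp: L_def)
  moreover have "\<forall>v\<in>X. (\<Sum>t\<in>I. L t * A t v) = 0"
  proof
    fix v assume "v \<in> X"
    have "(\<Sum>t\<in>I. L t * A t v) = (\<Sum>k\<in>g`I. l k * fst k v)"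
      using key[of "\<lambda>k. fst k v"] by (simp add: g_def)
    also have "\<dots> = fst y v" using l(2) by simp
    finally show "(\<Sum>t\<in>I. L t * A t v) = 0" using y(2) \<open>v \<in> X\<close> by simp
  qed
  moreover have "(\<Sum>t\<in>I. L t * b t) = snd y"
    using key[of snd] l(3) by (simp add: g_def)
  ultimately show ?thesis using y(3) by (intro exI[of _ L]) auto
qed

lemma edge_to_nbrs:
  assumes "finite E" "\<forall>i j. (i, j) \<in> E \<longrightarrow> (j, i) \<notin> E"
  shows "(\<Sum>e\<in>E. (if fst e = m then F (w e) (snd e) else 0) + (if snd e = m then F (w e) (fst e) else 0))
     = (\<Sum>j\<in>nbrs E m. F (edge_weight E w m j) j)"
proof -
  define A where "A = {j. (m, j) \<in> E}"
  define B where "B = {j. (j, m) \<in> E}"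
  have finA: "finite A" using finite_subset[of A "snd ` E"] assms(1) by (force simp: A_def)
  have finB: "finite B" using finite_subset[of B "fst ` E"] assms(1) by (force simp: B_def)
  have s1: "(\<Sum>e\<in>E. if fst e = m then F (w e) (snd e) else 0) = (\<Sum>j\<in>A. F (w (m, j)) j)"
  proof -
    have "(\<Sum>e\<in>E. if fst e = m then F (w e) (snd e) else 0) = (\<Sum>e\<in>{e\<in>E. fst e = m}. F (w e) (snd e))"
      using assms(1) by (simp add: sum.inter_filter)
    also have "{e\<in>E. fst e = m} = (\<lambda>j. (m, j)) ` A" by (force simp: A_def)
    also have "(\<Sum>e\<in>(\<lambda>j. (m, j)) ` A. F (w e) (snd e)) = (\<Sum>j\<in>A. F (w (m, j)) j)"
      by (subst sum.reindex) (auto simp: inj_on_def)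
    finally show ?thesis .
  qed
  have s2: "(\<Sum>e\<in>E. if snd e = m then F (w e) (fst e) else 0) = (\<Sum>j\<in>B. F (w (j, m)) j)"
  proof -
    have "(\<Sum>e\<in>E. if snd e = m then F (w e) (fst e) else 0) = (\<Sum>e\<in>{e\<in>E. snd e = m}. F (w e) (fst e))"
      using assms(1) by (simp add: sum.inter_filter)
    also have "{e\<in>E. snd e = m} = (\<lambda>j. (j, m)) ` B" by (force simp: B_def)
    also have "(\<Sum>e\<in>(\<lambda>j. (j, m)) ` B. F (w e) (fst e)) = (\<Sum>j\<in>B. F (w (j, m)) j)"
      by (subst sum.reindex) (auto simp: inj_on_def)
    finally show ?thesis .
  qed
  have nb: "nbrs E m = A \<union> B" by (auto simp: nbrs_def adj_def A_def B_def)
  have dis: "A \<inter> B = {}" using assms(2) by (auto simp: A_def B_def)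
  have "(\<Sum>j\<in>nbrs E m. F (edge_weight E w m j) j) = (\<Sum>j\<in>A. F (edge_weight E w m j) j) + (\<Sum>j\<in>B. F (edge_weight E w m j) j)"
    unfolding nb using finA finB dis by (rule sum.union_disjoint)
  also have "(\<Sum>j\<in>A. F (edge_weight E w m j) j) = (\<Sum>j\<in>A. F (w (m, j)) j)"
    by (rule sum.cong) (auto simp: A_def edge_weight_def)
  also have "(\<Sum>j\<in>B. F (edge_weight E w m j) j) = (\<Sum>j\<in>B. F (w (j, m)) j)"
    using assms(2) by (intro sum.cong) (auto simp: B_def edge_weight_def)
  finally show ?thesis using s1 s2 by (simp add: sum.distrib)
qed

definition cf :: "(nat \<Rightarrow> complex) \<Rightarrow> (nat \<Rightarrow> real) \<Rightarrow> nat \<Rightarrow> nat \<Rightarrow> nat \<Rightarrow> real" where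
  "cf z r i j k = (if k = 0 then Re (z i - z j) else if k = 1 then Im (z i - z j) else - (r i + r j))"

definition ae :: "(nat \<Rightarrow> complex) \<Rightarrow> (nat \<Rightarrow> real) \<Rightarrow> nat \<times> nat \<Rightarrow> nat \<times> nat \<Rightarrow> real" where
  "ae z r e u = (if fst u = fst e then cf z r (fst e) (snd e) (snd u) else 0)
              + (if fst u = snd e then cf z r (snd e) (fst e) (snd u) else 0)"

lemma sum_X: "(\<Sum>u\<in>{1..n} \<times> {0,1,2::nat}. f u) = (\<Sum>m\<in>{1..n}. f (m,0) + f (m,1) + f (m,2))"
  by (simp add: sum.cartesian_product' add.assoc)

lemma lin_ae:
  assumes "i \<in> {1..n}" "j \<in> {1..n}" "i \<noteq> j"
  shows "lin ({1..n} \<times> {0,1,2}) (ae z r (i, j)) x =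
    (cf z r i j 0 * x (i,0) + cf z r i j 1 * x (i,1) + cf z r i j 2 * x (i,2))
  + (cf z r j i 0 * x (j,0) + cf z r j i 1 * x (j,1) + cf z r j i 2 * x (j,2))"
proof -
  let ?Fi = "cf z r i j 0 * x (i,0) + cf z r i j 1 * x (i,1) + cf z r i j 2 * x (i,2)"
  let ?Fj = "cf z r j i 0 * x (j,0) + cf z r j i 1 * x (j,1) + cf z r j i 2 * x (j,2)"
  have "lin ({1..n} \<times> {0,1,2}) (ae z r (i, j)) x
     = (\<Sum>m\<in>{1..n}. (if m = i then ?Fi else 0) + (if m = j then ?Fj else 0))"
    unfolding lin_def sum_X
    by (rule sum.cong) (use assms(3) in \<open>auto simp: ae_def algebra_simps\<close>)
  also have "\<dots> = ?Fi + ?Fj" using assms by (simp add: sum.distrib)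
  finally show ?thesis .
qed

lemma ae_sum:
  assumes "finite E" "\<forall>i j. (i, j) \<in> E \<longrightarrow> (j, i) \<notin> E"
  shows "(\<Sum>e\<in>E. w e * ae z r e (m, k)) = (\<Sum>j\<in>nbrs E m. edge_weight E w m j * cf z r m j k)"
proof -
  have "(\<Sum>e\<in>E. w e * ae z r e (m, k)) = (\<Sum>e\<in>E. (if fst e = m then w e * cf z r m (snd e) k else 0)
      + (if snd e = m then w e * cf z r m (fst e) k else 0))"
    by (rule sum.cong) (auto simp: ae_def algebra_simps)
  also have "\<dots> = (\<Sum>j\<in>nbrs E m. edge_weight E w m j * cf z r m j k)"
    using edge_to_nbrs[OF assms, of m "\<lambda>a j. a * cf z r m j k" w] by simp
  finally show ?thesis .
qed

lemma coef0:
  assumes "finite E" "\<forall>i j. (i, j) \<in> E \<longrightarrow> (j, i) \<notin> E"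
  shows "(\<Sum>e\<in>E. w e * ae z r e (m, 0)) = Re (\<Sum>j\<in>nbrs E m. complex_of_real (edge_weight E w m j) * (z m - z j))"
  using ae_sum[OF assms] by (simp add: cf_def)

lemma coef1:
  assumes "finite E" "\<forall>i j. (i, j) \<in> E \<longrightarrow> (j, i) \<notin> E"
  shows "(\<Sum>e\<in>E. w e * ae z r e (m, 1)) = Im (\<Sum>j\<in>nbrs E m. complex_of_real (edge_weight E w m j) * (z m - z j))"
  using ae_sum[OF assms] by (simp add: cf_def)

lemma coef2:
  assumes "finite E" "\<forall>i j. (i, j) \<in> E \<longrightarrow> (j, i) \<notin> E"
  shows "(\<Sum>e\<in>E. w e * ae z r e (m, 2)) = - radial_sum E r w m"
proof -
  have "(\<Sum>j\<in>nbrs E m. edge_weight E w m j * cf z r m j 2) = (\<Sum>j\<in>nbrs E m. - (edge_weight E w m j * (r m + r j)))"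
    by (rule sum.cong) (auto simp: cf_def algebra_simps)
  then show ?thesis using ae_sum[OF assms, of w z r m 2] by (simp add: radial_sum_def sum_negf)
qed

datatype cidx = EP "nat \<times> nat" | EM "nat \<times> nat" | RP nat | RM nat

lemma sum_I:
  assumes "finite E" "finite P" "finite M"
  shows "(\<Sum>t\<in>EP`E \<union> EM`E \<union> RP`P \<union> RM`M. F t) =
    (\<Sum>e\<in>E. F (EP e)) + (\<Sum>e\<in>E. F (EM e)) + (\<Sum>m\<in>P. F (RP m)) + (\<Sum>m\<in>M. F (RM m))"
proof -
  have f: "finite (EP`E)" "finite (EM`E)" "finite (RP`P)" "finite (RM`M)" using assms by auto
  have "(\<Sum>t\<in>EP`E \<union> EM`E \<union> RP`P \<union> RM`M. F t) =
      (\<Sum>t\<in>EP`E \<union> EM`E \<union> RP`P. F t) + (\<Sum>t\<in>RM`M. F t)"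
    by (rule sum.union_disjoint) (use f in auto)
  also have "(\<Sum>t\<in>EP`E \<union> EM`E \<union> RP`P. F t) = (\<Sum>t\<in>EP`E \<union> EM`E. F t) + (\<Sum>t\<in>RP`P. F t)"
    by (rule sum.union_disjoint) (use f in auto)
  also have "(\<Sum>t\<in>EP`E \<union> EM`E. F t) = (\<Sum>t\<in>EP`E. F t) + (\<Sum>t\<in>EM`E. F t)"
    by (rule sum.union_disjoint) (use f in auto)
  also have "(\<Sum>t\<in>EP`E. F t) = (\<Sum>e\<in>E. F (EP e))" by (rule sum.reindex_cong[of EP]) (auto simp: inj_on_def)
  also have "(\<Sum>t\<in>EM`E. F t) = (\<Sum>e\<in>E. F (EM e))" by (rule sum.reindex_cong[of EM]) (auto simp: inj_on_def)
  also have "(\<Sum>t\<in>RP`P. F t) = (\<Sum>e\<in>P. F (RP e))" by (rule sum.reindex_cong[of RP]) (auto simp: inj_on_def)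
  also have "(\<Sum>t\<in>RM`M. F t) = (\<Sum>e\<in>M. F (RM e))" by (rule sum.reindex_cong[of RM]) (auto simp: inj_on_def)
  finally show ?thesis .
qed



definition dl :: "nat \<Rightarrow> nat \<times> nat \<Rightarrow> real" where
  "dl m u = (if u = (m, 2) then 1 else 0)"

lemma lin_neg: "lin X (\<lambda>u. - a u) x = - lin X a x"
  by (simp add: lin_def sum_negf)

lemma lin_dl:
  assumes "m \<in> {1..n}"
  shows "lin ({1..n} \<times> {0,1,2}) (dl m) x = x (m, 2)"
proof -
  have "lin ({1..n} \<times> {0,1,2}) (dl m) x = (\<Sum>u\<in>{1..n} \<times> {0,1,2}. if u = (m,2) then x u else 0)"
    unfolding lin_def by (rule sum.cong) (auto simp: dl_def)
  also have "\<dots> = x (m, 2)" using assms by (simp add: sum.delta)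
  finally show ?thesis .
qed

lemma sum_dl:
  assumes "finite P"
  shows "(\<Sum>m'\<in>P. L m' * dl m' (m, k)) = (if m \<in> P \<and> k = 2 then L m else 0)"
proof -
  have "(\<Sum>m'\<in>P. L m' * dl m' (m, k)) = (\<Sum>m'\<in>P. if m' = m then (if k = 2 then L m' else 0) else 0)"
    by (rule sum.cong) (auto simp: dl_def)
  also have "\<dots> = (if m \<in> P \<and> k = 2 then L m else 0)" using assms by (simp add: sum.delta)
  finally show ?thesis .
qed

theorem mainTheorem9:
  fixes n :: nat and E :: "(nat \<times> nat) set" and rot :: "nat \<Rightarrow> nat list"
    and z z' :: "nat \<Rightarrow> complex" and r r' :: "nat \<Rightarrow> real"
    and Vp Vm Veq V0 :: "nat set"
  assumes "planar_embedded n E rot"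
    and "packing n E rot z r"
    and "vpartition n Vp Vm Veq V0"
    and "inf_flex E z r z' r'"
    and "proper_signs Vp Vm Veq r'"
    and "\<not> trivial_flex n z z' r'"
  shows "extendable n E Vp Vm Veq z r z' r' \<longleftrightarrow> \<not> (\<exists>\<omega>. blocks n E Vp Vm Veq z r z' r' \<omega>)"
proof -
  have sg: "simple_graph n E" using assms(1) by (simp add: planar_embedded_def)
  have Esub: "E \<subseteq> {1..n} \<times> {1..n}" and norev: "\<forall>i j. (i, j) \<in> E \<longrightarrow> (j, i) \<notin> E"
    using sg by (auto simp: simple_graph_def)
  have finE: "finite E" by (rule finite_subset[OF Esub]) auto
  have part: "Vp \<subseteq> {1..n}" "Vm \<subseteq> {1..n}" "Veq \<subseteq> {1..n}" "V0 \<subseteq> {1..n}"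
    "Vp \<inter> Vm = {}" "Vp \<inter> Veq = {}" "Vm \<inter> Veq = {}"
    "Vp \<union> Vm \<union> Veq \<union> V0 = {1..n}"
    using assms(3) unfolding vpartition_def by blast+
  define X where "X = {1..n} \<times> {0,1,2::nat}"
  have finX: "finite X" by (simp add: X_def)
  define tVp where "tVp = {i\<in>Vp. r' i = 0}"
  define tVm where "tVm = {i\<in>Vm. r' i = 0}"
  define be where "be e = (r' (fst e) + r' (snd e))^2
      - dot2 (z' (fst e) - z' (snd e)) (z' (fst e) - z' (snd e))" for e
  have edge_lin: "lin X (ae z r e) x = dot2 (z (fst e) - z (snd e))
      (Complex (x (fst e, 0)) (x (fst e, 1)) - Complex (x (snd e, 0)) (x (snd e, 1)))
      - (r (fst e) + r (snd e)) * (x (fst e, 2) + x (snd e, 2))" if "e \<in> E" for e and x :: "nat \<times> nat \<Rightarrow> real"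
  proof -
    obtain i j where e: "e = (i, j)" by force
    have "i \<in> {1..n}" "j \<in> {1..n}" "i \<noteq> j" using that Esub norev e by auto
    from lin_ae[OF this, of z r x] show ?thesis
      unfolding X_def e by (simp add: cf_def dot2_def algebra_simps)
  qed
  have blk_sum: "(\<Sum>(i, j)\<in>E. \<omega> (i, j) * (dot2 (z' i - z' j) (z' i - z' j) - (r' i + r' j)^2))
      = - (\<Sum>e\<in>E. \<omega> e * be e)" for \<omega> :: "nat \<times> nat \<Rightarrow> real"
    unfolding sum_negf[symmetric] by (rule sum.cong) (auto simp: be_def algebra_simps)
  show ?thesis
  proof
    assume ext: "extendable n E Vp Vm Veq z r z' r'"
    show "\<not> (\<exists>\<omega>. blocks n E Vp Vm Veq z r z' r' \<omega>)"
    proof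
      assume "\<exists>\<omega>. blocks n E Vp Vm Veq z r z' r' \<omega>"
      then obtain \<omega> where bl: "blocks n E Vp Vm Veq z r z' r' \<omega>" by blast
      have eqs: "\<forall>m\<in>{1..n}. (\<Sum>j\<in>nbrs E m. complex_of_real (edge_weight E \<omega> m j) * (z m - z j)) = 0"
        and radm: "\<forall>i\<in>tVm. radial_sum E r \<omega> i \<ge> 0"
        and radp: "\<forall>i\<in>tVp. radial_sum E r \<omega> i \<le> 0"
        and rad0: "\<forall>i\<in>{1..n} - (tVp \<union> tVm \<union> Veq). radial_sum E r \<omega> i = 0"
        and pos: "(\<Sum>(i, j)\<in>E. \<omega> (i, j) * (dot2 (z' i - z' j) (z' i - z' j) - (r' i + r' j)^2)) > 0"
        using bl unfolding blocks_def Let_def equilibrium_stress_def tVp_def tVm_def by auto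
      from ext obtain z'' r'' where
        eq: "\<forall>(i, j)\<in>E. dot2 (z i - z j) (z'' i - z'' j) - (r i + r j) * (r'' i + r'' j)
                  = (r' i + r' j)^2 - dot2 (z' i - z' j) (z' i - z' j)"
        and sgn: "proper_signs tVp tVm Veq r''"
        unfolding extendable_def tVp_def tVm_def by blast
      define x where "x u = (if snd u = 0 then Re (z'' (fst u)) else if snd u = 1 then Im (z'' (fst u))
          else r'' (fst u))" for u :: "nat \<times> nat"
      have lx: "lin X (ae z r e) x = be e" if "e \<in> E" for e
      proof -
        have "lin X (ae z r e) x = dot2 (z (fst e) - z (snd e)) (z'' (fst e) - z'' (snd e))
           - (r (fst e) + r (snd e)) * (r'' (fst e) + r'' (snd e))"
          using edge_lin[OF that, of x] by (simp add: x_def complex_surj)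
        also have "\<dots> = be e" using eq that unfolding be_def by auto
        finally show ?thesis .
      qed
      have "(\<Sum>e\<in>E. \<omega> e * be e) = (\<Sum>e\<in>E. \<omega> e * lin X (ae z r e) x)"
        using lx by simp
      also have "\<dots> = (\<Sum>e\<in>E. \<Sum>u\<in>X. \<omega> e * ae z r e u * x u)"
        by (simp add: lin_def sum_distrib_left mult.assoc)
      also have "\<dots> = (\<Sum>u\<in>X. \<Sum>e\<in>E. \<omega> e * ae z r e u * x u)" by (rule sum.swap)
      also have "\<dots> = (\<Sum>u\<in>X. (\<Sum>e\<in>E. \<omega> e * ae z r e u) * x u)"
        by (simp add: sum_distrib_right)
      also have "\<dots> = (\<Sum>m\<in>{1..n}. (\<Sum>e\<in>E. \<omega> e * ae z r e (m, 0)) * x (m, 0)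
          + (\<Sum>e\<in>E. \<omega> e * ae z r e (m, 1)) * x (m, 1) + (\<Sum>e\<in>E. \<omega> e * ae z r e (m, 2)) * x (m, 2))"
        unfolding X_def sum_X ..
      also have "\<dots> = (\<Sum>m\<in>{1..n}. - (radial_sum E r \<omega> m * r'' m))"
      proof (rule sum.cong[OF refl])
        fix m assume m: "m \<in> {1..n}"
        have Sm: "(\<Sum>j\<in>nbrs E m. complex_of_real (edge_weight E \<omega> m j) * (z m - z j)) = 0"
          using eqs m by blast
        have h0: "(\<Sum>e\<in>E. \<omega> e * ae z r e (m, 0)) = 0" using coef0[OF finE norev, of \<omega> z r m, unfolded Sm] by simp
        have h1: "(\<Sum>e\<in>E. \<omega> e * ae z r e (m, 1)) = 0" using coef1[OF finE norev, of \<omega> z r m, unfolded Sm] by simp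
        have h2: "(\<Sum>e\<in>E. \<omega> e * ae z r e (m, 2)) = - radial_sum E r \<omega> m" using coef2[OF finE norev] by simp
        show "(\<Sum>e\<in>E. \<omega> e * ae z r e (m, 0)) * x (m, 0)
          + (\<Sum>e\<in>E. \<omega> e * ae z r e (m, 1)) * x (m, 1) + (\<Sum>e\<in>E. \<omega> e * ae z r e (m, 2)) * x (m, 2)
          = - (radial_sum E r \<omega> m * r'' m)"
          unfolding h0 h1 h2 by (simp add: x_def)
      qed
      finally have s: "(\<Sum>e\<in>E. \<omega> e * be e) = (\<Sum>m\<in>{1..n}. - (radial_sum E r \<omega> m * r'' m))" .
      have "radial_sum E r \<omega> m * r'' m \<le> 0" if mn: "m \<in> {1..n}" for m
      proof -
        consider "m \<in> tVp" | "m \<in> tVm" | "m \<in> Veq" | "m \<in> {1..n} - (tVp \<union> tVm \<union> Veq)"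
          using mn by blast
        then show ?thesis
        proof cases
          case 1 then show ?thesis using radp sgn unfolding proper_signs_def
            by (meson mult_nonpos_nonneg)
        next
          case 2 then show ?thesis using radm sgn unfolding proper_signs_def
            by (meson mult_nonneg_nonpos)
        next
          case 3 then show ?thesis using sgn unfolding proper_signs_def by simp
        next
          case 4 then show ?thesis using rad0 by simp
        qed
      qed
      then have "(\<Sum>e\<in>E. \<omega> e * be e) \<ge> 0" unfolding s by (intro sum_nonneg) auto
      then show False using pos blk_sum[of \<omega>] by linarith
    qed
  next
    assume nb: "\<not> (\<exists>\<omega>. blocks n E Vp Vm Veq z r z' r' \<omega>)"
    show "extendable n E Vp Vm Veq z r z' r'"
    proof (rule ccontr)
      assume notext: "\<not> extendable n E Vp Vm Veq z r z' r'"
      define P where "P = tVp \<union> Veq"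
      define M where "M = tVm \<union> Veq"
      have finP: "finite P" and finM: "finite M"
        using part finite_subset[of _ "{1..n}"] by (auto simp: P_def M_def tVp_def tVm_def)
      have PM: "P \<subseteq> {1..n}" "M \<subseteq> {1..n}" using part by (auto simp: P_def M_def tVp_def tVm_def)
      define A where "A t = (case t of EP e \<Rightarrow> ae z r e | EM e \<Rightarrow> (\<lambda>u. - ae z r e u)
          | RP m \<Rightarrow> (\<lambda>u. - dl m u) | RM m \<Rightarrow> dl m)" for t
      define bb where "bb t = (case t of EP e \<Rightarrow> be e | EM e \<Rightarrow> - be e | RP m \<Rightarrow> 0 | RM m \<Rightarrow> 0)" for t
      define I where "I = EP`E \<union> EM`E \<union> RP`P \<union> RM`M"
      have finI: "finite I" using finE finP finM by (simp add: I_def)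
      have infeas: "\<not> (\<exists>x. \<forall>t\<in>I. lin X (A t) x \<le> bb t)"
      proof
        assume "\<exists>x. \<forall>t\<in>I. lin X (A t) x \<le> bb t"
        then obtain x where x: "\<forall>t\<in>I. lin X (A t) x \<le> bb t" by blast
        define z'' where "z'' m = Complex (x (m, 0)) (x (m, 1))" for m
        define r'' where "r'' m = x (m, 2)" for m
        have "\<forall>(i, j)\<in>E. dot2 (z i - z j) (z'' i - z'' j) - (r i + r j) * (r'' i + r'' j)
                  = (r' i + r' j)^2 - dot2 (z' i - z' j) (z' i - z' j)"
        proof (clarify)
          fix i j assume ij: "(i, j) \<in> E"
          have "EP (i,j) \<in> I" "EM (i,j) \<in> I" using ij by (auto simp: I_def)
          then have "lin X (A (EP (i,j))) x \<le> bb (EP (i,j))" "lin X (A (EM (i,j))) x \<le> bb (EM (i,j))"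
            using x by blast+
          then have "lin X (ae z r (i,j)) x \<le> be (i,j)" by (simp add: A_def bb_def)
          moreover have "lin X (\<lambda>u. - ae z r (i,j) u) x \<le> - be (i,j)"
            using \<open>lin X (A (EM (i,j))) x \<le> bb (EM (i,j))\<close> by (simp add: A_def bb_def)
          ultimately have "lin X (ae z r (i,j)) x = be (i,j)" by (simp add: lin_neg)
          then show "dot2 (z i - z j) (z'' i - z'' j) - (r i + r j) * (r'' i + r'' j)
                  = (r' i + r' j)^2 - dot2 (z' i - z' j) (z' i - z' j)"
            using edge_lin[OF ij, of x] by (simp add: z''_def r''_def be_def)
        qed
        moreover have "proper_signs tVp tVm Veq r''"
        proof -
          have "r'' m \<ge> 0" if "m \<in> P" for m
          proof -
            have "RP m \<in> I" using that by (auto simp: I_def)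
            then have "lin X (A (RP m)) x \<le> bb (RP m)" using x by blast
            then have "lin X (\<lambda>u. - dl m u) x \<le> 0" by (simp add: A_def bb_def)
            then show ?thesis using lin_dl[of m n x] PM that by (auto simp: lin_neg X_def r''_def)
          qed
          moreover have "r'' m \<le> 0" if "m \<in> M" for m
          proof -
            have "RM m \<in> I" using that by (auto simp: I_def)
            then have "lin X (A (RM m)) x \<le> bb (RM m)" using x by blast
            then have "lin X (dl m) x \<le> 0" by (simp add: A_def bb_def)
            then show ?thesis using lin_dl[of m n x] PM that by (auto simp: X_def r''_def)
          qed
          ultimately show ?thesis unfolding proper_signs_def P_def M_def
            by (auto intro: order.antisym)
        qed
        ultimately show False using notext unfolding extendable_def tVp_def tVm_def by blast
      qed
      from farkas_idx[OF finX finI infeas] obtain L where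
        L: "\<forall>t\<in>I. L t \<ge> 0" "\<forall>v\<in>X. (\<Sum>t\<in>I. L t * A t v) = 0" "(\<Sum>t\<in>I. L t * bb t) < 0"
        by blast
      define \<omega> where "\<omega> e = L (EP e) - L (EM e)" for e
      have "(\<Sum>t\<in>I. L t * bb t) = (\<Sum>e\<in>E. \<omega> e * be e)"
        unfolding I_def sum_I[OF finE finP finM]
        by (simp add: bb_def \<omega>_def sum.distrib[symmetric] algebra_simps)
      then have negs: "(\<Sum>e\<in>E. \<omega> e * be e) < 0" using L(3) by simp
      have coef: "(\<Sum>e\<in>E. \<omega> e * ae z r e (m, k)) - (if m \<in> P \<and> k = 2 then L (RP m) else 0)
          + (if m \<in> M \<and> k = 2 then L (RM m) else 0) = 0" if "m \<in> {1..n}" "k \<in> {0,1,2}" for m k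
      proof -
        have "(\<Sum>t\<in>I. L t * A t (m, k)) = 0" using L(2) that by (auto simp: X_def)
        moreover have "(\<Sum>t\<in>I. L t * A t (m, k)) = (\<Sum>e\<in>E. \<omega> e * ae z r e (m, k))
           - (\<Sum>m'\<in>P. L (RP m') * dl m' (m, k)) + (\<Sum>m'\<in>M. L (RM m') * dl m' (m, k))"
          unfolding I_def sum_I[OF finE finP finM]
          by (simp add: A_def \<omega>_def sum_negf sum_subtractf left_diff_distrib)
        ultimately show ?thesis by (simp add: sum_dl[OF finP] sum_dl[OF finM])
      qed
      have "blocks n E Vp Vm Veq z r z' r' \<omega>"
        unfolding blocks_def Let_def equilibrium_stress_def
      proof (intro conjI ballI)
        fix m assume m: "m \<in> {1..n}"
        show "(\<Sum>j\<in>nbrs E m. complex_of_real (edge_weight E \<omega> m j) * (z m - z j)) = 0"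
        proof -
          have c0: "(\<Sum>e\<in>E. \<omega> e * ae z r e (m, 0)) = 0" using coef[OF m, of 0] by simp
          have c1: "(\<Sum>e\<in>E. \<omega> e * ae z r e (m, 1)) = 0" using coef[OF m, of 1] by simp
          have r0: "Re (\<Sum>j\<in>nbrs E m. complex_of_real (edge_weight E \<omega> m j) * (z m - z j)) = 0"
            using coef0[OF finE norev, of \<omega> z r m] c0 by argo
          have i0: "Im (\<Sum>j\<in>nbrs E m. complex_of_real (edge_weight E \<omega> m j) * (z m - z j)) = 0"
            using coef1[OF finE norev, of \<omega> z r m] c1 by argo
          show ?thesis using r0 i0 by (intro complex_eqI) auto
        qed
      next
        fix m assume m: "m \<in> {i \<in> Vm. r' i = 0}"
        then have "m \<in> M" "m \<notin> P" "m \<in> {1..n}" using part by (auto simp: M_def P_def tVm_def tVp_def)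
        moreover have "L (RM m) \<ge> 0" using L(1) \<open>m \<in> M\<close> by (auto simp: I_def)
        ultimately show "radial_sum E r \<omega> m \<ge> 0"
          using coef[of m 2] by (simp add: coef2[OF finE norev])
      next
        fix m assume m: "m \<in> {i \<in> Vp. r' i = 0}"
        then have "m \<notin> M" "m \<in> P" "m \<in> {1..n}" using part by (auto simp: M_def P_def tVm_def tVp_def)
        moreover have "L (RP m) \<ge> 0" using L(1) \<open>m \<in> P\<close> by (auto simp: I_def)
        ultimately show "radial_sum E r \<omega> m \<le> 0"
          using coef[of m 2] by (simp add: coef2[OF finE norev])
      next
        fix m assume m: "m \<in> {1..n} - ({i \<in> Vp. r' i = 0} \<union> {i \<in> Vm. r' i = 0} \<union> Veq)"
        then have "m \<notin> M" "m \<notin> P" "m \<in> {1..n}" by (auto simp: M_def P_def tVm_def tVp_def)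
        then show "radial_sum E r \<omega> m = 0"
          using coef[of m 2] by (simp add: coef2[OF finE norev])
      next
        show "(\<Sum>(i, j)\<in>E. \<omega> (i, j) * (dot2 (z' i - z' j) (z' i - z' j) - (r' i + r' j)^2)) > 0"
          using blk_sum[of \<omega>] negs by linarith
      qed
      then show False using nb by blast
    qed
  qed
qed

end
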